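(* Let $\mathfrak n$ be a non-singular 2-step nilpotent real Lie algebra with center $\mathfrak z$ such that $\dim\mathfrak n>3\dim\mathfrak z$. Then every closed 2-form $\omega$ on $\mathfrak n$ satisfies $\omega(Z,U)=0$ for all $Z\in\mathfrak z$ and $U\in\mathfrak n$.
   Context: A real Lie algebra $\mathfrak n$ is 2-step nilpotent if $[[U,V],W]=0$ for all $U,V,W$ and $\mathfrak n$ is not abelian. It is non-singular if for every $X\in\mathfrak n\setminus\mathfrak z$ the map $\mathrm{ad}(X):\mathfrak n\to\mathfrak z$, $Y\mapsto[X,Y]$, is onto $\mathfrak z$. A 2-form on $\mathfrak n$ is an alternating bilinear form $\omega$ on $\mathfrak n$; it is closed iff $\omega([U,V],W)+\omega([V,W],U)+\omega([W,U],V)=0$ for all $U,V,W\in\mathfrak n$. *)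

theory Defs
  imports "HOL-Analysis.Analysis"
begin

text \<open>A finite-dimensional real Lie algebra is modelled as a Euclidean space type
  (a finite-dimensional real vector space) with a bracket operation.\<close>

definition lie_algebra :: "('a::real_vector \<Rightarrow> 'a \<Rightarrow> 'a) \<Rightarrow> bool" where
  "lie_algebra br \<longleftrightarrow> bilinear br \<and> (\<forall>x. br x x = 0) \<and>
     (\<forall>x y z. br x (br y z) + br y (br z x) + br z (br x y) = 0)"

definition lie_center :: "('a::real_vector \<Rightarrow> 'a \<Rightarrow> 'a) \<Rightarrow> 'a set" where
  "lie_center br = {X. \<forall>Y. br X Y = 0}"

definition two_step_nilpotent :: "('a::real_vector \<Rightarrow> 'a \<Rightarrow> 'a) \<Rightarrow> bool" where
  "two_step_nilpotent br \<longleftrightarrow> lie_algebra br \<and> (\<forall>U V W. br (br U V) W = 0) \<and>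
     \<not> (\<forall>U V. br U V = 0)"

definition nonsingular :: "('a::real_vector \<Rightarrow> 'a \<Rightarrow> 'a) \<Rightarrow> bool" where
  "nonsingular br \<longleftrightarrow> (\<forall>X. X \<notin> lie_center br \<longrightarrow> range (br X) = lie_center br)"

definition two_form :: "('a::real_vector \<Rightarrow> 'a \<Rightarrow> real) \<Rightarrow> bool" where
  "two_form \<omega> \<longleftrightarrow> bilinear \<omega> \<and> (\<forall>x. \<omega> x x = 0)"

definition closed_form :: "('a::real_vector \<Rightarrow> 'a \<Rightarrow> 'a) \<Rightarrow> ('a \<Rightarrow> 'a \<Rightarrow> real) \<Rightarrow> bool" where
  "closed_form br \<omega> \<longleftrightarrow>
     (\<forall>U V W. \<omega> (br U V) W + \<omega> (br V W) U + \<omega> (br W U) V = 0)"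

end

theory Submission
  imports Defs
begin

lemma rank_nullity_le:
  fixes L :: "'a::euclidean_space \<Rightarrow> 'b::euclidean_space"
  assumes lin: "linear L" and sI: "subspace I"
  shows "dim I \<le> dim (L ` I) + dim (I \<inter> {x. L x = 0})"
proof -
  define K where "K = I \<inter> {x. L x = 0}"
  have sK: "subspace K" unfolding K_def
    using sI lin by (auto simp: subspace_def linear_add linear_scale linear_0)
  define J where "J = {y \<in> I. \<forall>x\<in>K. orthogonal x y}"
  have dJ: "dim J + dim K = dim I" unfolding J_def
    using dim_subspace_orthogonal_to_vectors[OF sK sI] K_def by auto
  have sJ: "subspace J" unfolding J_def using sI
    by (auto simp: subspace_def orthogonal_clauses)
  have inj: "inj_on L (span J)"
  proof -
    have e: "span J = J" using sJ by (simp add: span_eq_iff)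
    have ij: "inj_on L J"
    proof (rule inj_onI)
      fix x y assume xy: "x \<in> J" "y \<in> J" "L x = L y"
      then have "x - y \<in> J" using sJ by (simp add: subspace_diff)
      moreover have "L (x - y) = 0" using xy lin by (simp add: linear_diff)
      ultimately have "x - y \<in> K" unfolding J_def K_def by auto
      with \<open>x - y \<in> J\<close> have "orthogonal (x - y) (x - y)" unfolding J_def by auto
      then show "x = y" by (simp add: orthogonal_def)
    qed
    show ?thesis using e ij by (simp only:)
  qed
  have "dim (L ` J) = dim J" using dim_image_eq[OF lin inj] .
  moreover have "dim (L ` J) \<le> dim (L ` I)"
    by (rule dim_subset) (auto simp: J_def)
  ultimately show ?thesis using dJ unfolding K_def[symmetric] by linarith
qed


theorem mainTheorem2:
  fixes br :: "'a::euclidean_space \<Rightarrow> 'a \<Rightarrow> 'a"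
    and \<omega> :: "'a \<Rightarrow> 'a \<Rightarrow> real"
  assumes "two_step_nilpotent br"
    and "nonsingular br"
    and "DIM('a) > 3 * dim (lie_center br)"
    and "two_form \<omega>"
    and "closed_form br \<omega>"
  shows "\<forall>Z \<in> lie_center br. \<forall>U. \<omega> Z U = 0"
proof -
  define z where "z = lie_center br"
  have bil: "bilinear br" using assms(1) by (simp add: two_step_nilpotent_def lie_algebra_def)
  have alt: "\<And>x. br x x = 0" using assms(1) by (simp add: two_step_nilpotent_def lie_algebra_def)
  have anti: "br x y = - br y x" for x y
  proof -
    have "0 = br (x + y) (x + y)" using alt by simp
    also have "\<dots> = br x y + br y x"
      unfolding bilinear_ladd[OF bil] bilinear_radd[OF bil] using alt by simp
    finally have "br x y + br y x = 0" by (rule sym)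
    then show ?thesis by (simp add: eq_neg_iff_add_eq_0)
  qed
  have brz: "br U V \<in> z" for U V
    using assms(1) by (simp add: two_step_nilpotent_def z_def lie_center_def)
  have ns: "\<And>X. X \<notin> z \<Longrightarrow> range (br X) = z" using assms(2) by (simp add: nonsingular_def z_def)
  have sz: "subspace z" unfolding z_def lie_center_def subspace_def
    by (auto simp: bilinear_ladd[OF bil] bilinear_lmul[OF bil] bilinear_lzero[OF bil])
  have linr: "linear (br U)" for U using bil by (simp add: bilinear_def)
  have bw: "bilinear \<omega>" using assms(4) by (simp add: two_form_def)
  have key: "z \<subseteq> span {br V V' | V V'. br U V = 0 \<and> br U V' = 0}" for U
  proof (rule ccontr)
    assume nsub: "\<not> ?thesis"
    define C where "C = {V. br U V = 0}"
    define S where "S = {br V V' | V V'. br U V = 0 \<and> br U V' = 0}"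
    have sC: "subspace C" unfolding C_def subspace_def
      by (auto simp: linear_add[OF linr] linear_scale[OF linr] linear_0[OF linr])
    have "S \<subseteq> z" unfolding S_def using brz by auto
    then have "span S \<subseteq> z" using sz by (simp add: span_minimal)
    moreover have spz: "span z = z" using sz by (simp add: span_eq_iff)
    moreover have "\<not> z \<subseteq> span S" using nsub by (simp add: S_def)
    ultimately have "span S \<subset> span z" by blast
    then obtain w where w: "w \<noteq> 0" "w \<in> span z" "\<And>y. y \<in> span S \<Longrightarrow> orthogonal w y"
      by (rule orthogonal_to_subspace_exists_gen) blast
    have wz: "w \<in> z" using w(2) spz by simp
    define L where "L V = (\<Sum>b\<in>Basis. (w \<bullet> br V b) *\<^sub>R b)" for V
    have linL: "linear L"
      by (rule linearI) (simp_all add: L_def bilinear_ladd[OF bil] bilinear_lmul[OF bil]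
          inner_add_right scaleR_add_left sum.distrib scaleR_sum_right)
    have LW: "L V \<bullet> W = w \<bullet> br V W" for V W
    proof -
      have "br V W = br V (\<Sum>b\<in>Basis. (W \<bullet> b) *\<^sub>R b)" by (simp add: euclidean_representation)
      also have "\<dots> = (\<Sum>b\<in>Basis. (W \<bullet> b) *\<^sub>R br V b)"
        by (simp add: linear_sum[OF linr] linear_scale[OF linr])
      finally have "w \<bullet> br V W = (\<Sum>b\<in>Basis. (W \<bullet> b) * (w \<bullet> br V b))"
        by (simp add: inner_sum_right)
      moreover have "L V \<bullet> W = (\<Sum>b\<in>Basis. (w \<bullet> br V b) * (b \<bullet> W))"
        by (simp add: L_def inner_sum_left)
      ultimately show ?thesis by (simp add: inner_commute mult.commute)
    qed
    have kerL: "{x. L x = 0} \<subseteq> z"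
    proof
      fix V assume "V \<in> {x. L x = 0}"
      then have h: "w \<bullet> br V W = 0" for W using LW[of V W] by simp
      show "V \<in> z"
      proof (rule ccontr)
        assume "V \<notin> z"
        then have "w \<in> range (br V)" using ns wz by blast
        then obtain W where "w = br V W" by blast
        then have "w \<bullet> w = 0" using h by simp
        with w(1) show False by simp
      qed
    qed
    have imgL: "L ` C \<subseteq> {y \<in> UNIV. \<forall>x\<in>C. orthogonal x y}"
    proof -
      have "orthogonal x (L V)" if "V \<in> C" "x \<in> C" for V x
      proof -
      from that have "br V x \<in> span S" unfolding S_def C_def by (auto intro: span_base)
      then have "w \<bullet> br V x = 0" using w(3) by (simp add: orthogonal_def)
      then show "orthogonal x (L V)" using LW[of V x] by (simp add: orthogonal_def inner_commute)
      qed
      then show ?thesis by blast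
    qed
    have d1: "dim {y \<in> UNIV. \<forall>x\<in>C. orthogonal x y} + dim C = DIM('a)"
      using dim_subspace_orthogonal_to_vectors[OF sC subspace_UNIV] by simp
    have d2: "dim (L ` C) \<le> dim {y \<in> UNIV. \<forall>x\<in>C. orthogonal x y}"
      using imgL by (rule dim_subset)
    have d3: "dim C \<le> dim (L ` C) + dim (C \<inter> {x. L x = 0})"
      by (rule rank_nullity_le[OF linL sC])
    have d4: "dim (C \<inter> {x. L x = 0}) \<le> dim z" using kerL by (intro dim_subset) auto
    have d5: "DIM('a) \<le> dim z + dim C"
    proof (cases "U \<in> z")
      case True
      then have "C = UNIV" unfolding C_def z_def lie_center_def by auto
      then show ?thesis by simp
    next
      case False
      have "dim (UNIV::'a set) \<le> dim (br U ` UNIV) + dim (UNIV \<inter> {x. br U x = 0})"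
        by (rule rank_nullity_le[OF linr subspace_UNIV])
      then show ?thesis using ns[OF False] by (simp add: C_def)
    qed
    show False using d1 d2 d3 d4 d5 assms(3) unfolding z_def by linarith
  qed
  have cl: "\<omega> (br V V') U = 0" if "br U V = 0" "br U V' = 0" for U V V'
  proof -
    have "\<omega> (br V V') U + \<omega> (br V' U) V + \<omega> (br U V) V' = 0"
      using assms(5) by (simp add: closed_form_def)
    moreover have "br V' U = 0" using anti[of V' U] that by simp
    ultimately show ?thesis using that by (simp add: bilinear_lzero[OF bw])
  qed
  show ?thesis
  proof (intro ballI allI)
    fix Z U assume "Z \<in> lie_center br"
    then have "Z \<in> span {br V V' | V V'. br U V = 0 \<and> br U V' = 0}" using key z_def by blast
    then show "\<omega> Z U = 0"
    proof (rule span_induct)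
      show "\<And>x. x \<in> {br V V' | V V'. br U V = 0 \<and> br U V' = 0} \<Longrightarrow> \<omega> x U = 0"
        using cl by auto
      show "subspace {x. \<omega> x U = 0}" unfolding subspace_def
        by (auto simp: bilinear_ladd[OF bw] bilinear_lmul[OF bw] bilinear_lzero[OF bw])
    qed
  qed
qed

end
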